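(* For $\theta>0$ let $U_1,U_2,\dots$ be i.i.d. random variables with the $\mathrm{Beta}(1,\theta)$ distribution, and set $X_1=U_1$ and $X_n=(1-U_1)\cdots(1-U_{n-1})U_n$ for $n\ge 2$. Let $\Pi^{\mathrm{gem}}_\theta$ denote the law of $\mathbf X=(X_1,X_2,\dots)$ on $$\Delta=\Big\{(x_1,x_2,\dots): x_k\ge 0 \text{ for all } k,\ \sum_{i=1}^\infty x_i\le 1\Big\},$$ equipped with the subspace topology of $\mathbb R^\infty$ (product topology). Then, as $\theta\to\infty$, the family $\{\Pi^{\mathrm{gem}}_\theta:\theta>0\}$ satisfies a large deviation principle on $\Delta$ with speed $\theta$ and rate function $$S(\mathbf x)=\begin{cases}\log\dfrac{1}{1-\sum_{k=1}^\infty x_k}, & \mathbf x=(x_1,x_2,\dots)\in\Delta,\ \sum_{k=1}^\infty x_k<1,\\ \infty, & \text{otherwise}.\end{cases}$$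
   Context: An LDP with speed $\theta$ and rate function $I$ means: for closed $F$, $\limsup_{\theta\to\infty}\theta^{-1}\log P(F)\le-\inf_F I$, and for open $G$, $\liminf_{\theta\to\infty}\theta^{-1}\log P(G)\ge-\inf_G I$. *)

theory Defs
  imports "HOL-Probability.Probability"
begin

definition beta1 :: "real \<Rightarrow> real measure" where
  "beta1 \<theta> = density lborel
     (\<lambda>u. ennreal (indicator {0<..<1} u * \<theta> * (1 - u) powr (\<theta> - 1)))"

text \<open>Stick-breaking map (0-indexed): X n = (1-U 0)...(1-U (n-1)) * U n.\<close>
definition gem_map :: "(nat \<Rightarrow> real) \<Rightarrow> (nat \<Rightarrow> real)" where
  "gem_map u = (\<lambda>n. (\<Prod>i<n. 1 - u i) * u n)"

definition gem_law :: "real \<Rightarrow> (nat \<Rightarrow> real) measure" where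
  "gem_law \<theta> = distr (PiM UNIV (\<lambda>_. beta1 \<theta>)) borel gem_map"

definition gem_simplex :: "(nat \<Rightarrow> real) set" where
  "gem_simplex = {x. (\<forall>k. 0 \<le> x k) \<and> summable x \<and> suminf x \<le> 1}"

definition gem_rate :: "(nat \<Rightarrow> real) \<Rightarrow> ereal" where
  "gem_rate x = (if x \<in> gem_simplex \<and> suminf x < 1
                 then ereal (ln (1 / (1 - suminf x))) else \<infinity>)"

definition elog :: "real \<Rightarrow> ereal" where
  "elog p = (if 0 < p then ereal (ln p) else -\<infinity>)"

end

theory Submission
  imports Defs
begin


lemma beta_FTC:
  fixes a b \<theta> :: real
  assumes ab: "0 \<le> a" "a < b" "b \<le> 1" and th: "0 < \<theta>"
  shows "set_integrable lborel {a<..<b} (\<lambda>x. \<theta> * (1 - x) powr (\<theta> - 1))"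
    "(LBINT x=ereal a..ereal b. \<theta> * (1 - x) powr (\<theta> - 1)) = (1-a) powr \<theta> - (1-b) powr \<theta>"
proof -
  let ?F = "\<lambda>x::real. - ((1 - x) powr \<theta>)"
  have D: "DERIV ?F x :> \<theta> * (1 - x) powr (\<theta> - 1)" if "x < 1" for x
    using that by (auto intro!: derivative_eq_intros)
  have C: "isCont (\<lambda>x. \<theta> * (1 - x) powr (\<theta> - 1)) x" if "x < 1" for x
    using that by (auto intro!: continuous_intros)
  have A: "((?F \<circ> real_of_ereal) \<longlongrightarrow> ?F a) (at_right (ereal a))"
    using ab unfolding ereal_tendsto_simps by (auto intro!: tendsto_eq_intros)
  have B0: "((\<lambda>x::real. (1 - x) powr \<theta>) \<longlongrightarrow> (1-b) powr \<theta>) (at_left b)"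
  proof (cases "b = 1")
    case True
    have "((\<lambda>x::real. (1 - x) powr \<theta>) \<longlongrightarrow> 0) (at_left 1)"
      apply (rule tendsto_zero_powrI)
      using th by (auto intro!: tendsto_eq_intros eventually_at_leftI[of 0])
    then show ?thesis using True by simp
  next
    case False
    then show ?thesis using ab by (auto intro!: tendsto_eq_intros)
  qed
  have B: "((?F \<circ> real_of_ereal) \<longlongrightarrow> ?F b) (at_left (ereal b))"
    using tendsto_minus[OF B0] unfolding ereal_tendsto_simps by (simp add: o_def)
  note R = interval_integral_FTC_nonneg[of "ereal a" "ereal b" ?F "\<lambda>x. \<theta> * (1 - x) powr (\<theta> - 1)", OF _ _ _ _ A B]
  have "a < ereal x \<Longrightarrow> ereal x < b \<Longrightarrow> x < 1" for x using ab by auto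
  then show "set_integrable lborel {a<..<b} (\<lambda>x. \<theta> * (1 - x) powr (\<theta> - 1))"
    "(LBINT x=ereal a..ereal b. \<theta> * (1 - x) powr (\<theta> - 1)) = (1-a) powr \<theta> - (1-b) powr \<theta>"
    using R D C th ab by auto
qed

lemma beta1_meas: "(\<lambda>u. ennreal (indicator {0<..<1} u * \<theta> * (1 - u) powr (\<theta> - 1))) \<in> borel_measurable borel"
  by measurable

lemma sets_beta1[simp]: "sets (beta1 \<theta>) = sets borel" and space_beta1[simp]: "space (beta1 \<theta>) = UNIV"
  by (auto simp: beta1_def)

lemma beta1_restrict:
  assumes "A \<in> sets borel"
  shows "emeasure (beta1 \<theta>) A = emeasure (beta1 \<theta>) (A \<inter> {0<..<1})"
  unfolding beta1_def using assms
  apply (subst (1 2) emeasure_density)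
  apply (auto intro!: nn_integral_cong simp: indicator_def)
  done

lemma beta1_interval:
  fixes a b \<theta> :: real
  assumes ab: "0 \<le> a" "a < b" "b \<le> 1" and th: "0 < \<theta>"
  shows "emeasure (beta1 \<theta>) {a<..<b} = ennreal ((1-a) powr \<theta> - (1-b) powr \<theta>)"
proof -
  note I = beta_FTC[OF ab th]
  have "emeasure (beta1 \<theta>) {a<..<b} = (\<integral>\<^sup>+x. ennreal (indicator {a<..<b} x *\<^sub>R (\<theta> * (1 - x) powr (\<theta> - 1))) \<partial>lborel)"
    unfolding beta1_def
    apply (subst emeasure_density)
      apply simp_all
    apply (intro nn_integral_cong)
    using ab by (auto simp: indicator_def)
  also have "\<dots> = ennreal (LINT x:{a<..<b}|lborel. \<theta> * (1 - x) powr (\<theta> - 1))"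
    unfolding set_lebesgue_integral_def
    apply (rule nn_integral_eq_integral)
    using I(1) th unfolding set_integrable_def by (auto simp: indicator_def)
  also have "\<dots> = ennreal ((1-a) powr \<theta> - (1-b) powr \<theta>)"
    using I(2) ab by (simp add: interval_lebesgue_integral_le_eq)
  finally show ?thesis .
qed

lemma prob_space_beta1: assumes "0 < \<theta>" shows "prob_space (beta1 \<theta>)"
proof
  have "emeasure (beta1 \<theta>) (space (beta1 \<theta>)) = emeasure (beta1 \<theta>) {0<..<1}"
    using beta1_restrict[of UNIV \<theta>] by simp
  also have "\<dots> = 1" using beta1_interval[of 0 1 \<theta>] assms by simp
  finally show "emeasure (beta1 \<theta>) (space (beta1 \<theta>)) = 1" .
qed

lemma beta1_interval_measure:
  fixes a b \<theta> :: real
  assumes ab: "0 \<le> a" "a < b" "b \<le> 1" and th: "0 < \<theta>"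
  shows "measure (beta1 \<theta>) {a<..<b} = (1-a) powr \<theta> - (1-b) powr \<theta>"
proof -
  have "(1-b) powr \<theta> \<le> (1-a) powr \<theta>" using ab th by (intro powr_mono2) auto
  then show ?thesis using beta1_interval[OF assms] by (simp add: measure_def)
qed

lemma beta1_ge:
  fixes c \<theta> :: real
  assumes c: "0 \<le> c" "c < 1" and th: "0 < \<theta>"
  shows "measure (beta1 \<theta>) {c..} \<le> (1-c) powr \<theta>"
proof (cases "c = 0")
  case True
  interpret prob_space "beta1 \<theta>" by (rule prob_space_beta1[OF th])
  show ?thesis using True by simp
next
  case False
  interpret prob_space "beta1 \<theta>" by (rule prob_space_beta1[OF th])
  have "measure (beta1 \<theta>) {c..} = 1 - measure (beta1 \<theta>) {..<c}"
    using prob_compl[of "{..<c}"] by (simp add: Compl_eq_Diff_UNIV[symmetric] not_less atLeast_def)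
  also have "measure (beta1 \<theta>) {0<..<c} \<le> measure (beta1 \<theta>) {..<c}"
    by (intro finite_measure_mono) auto
  then have "1 - measure (beta1 \<theta>) {..<c} \<le> 1 - measure (beta1 \<theta>) {0<..<c}" by simp
  also have "\<dots> = (1-c) powr \<theta>" using beta1_interval_measure[of 0 c \<theta>] False c th by simp
  finally show ?thesis .
qed



definition cfac :: "(nat \<Rightarrow> real) \<Rightarrow> nat \<Rightarrow> real" where
  "cfac a i = a i / (1 - (\<Sum>j<i. a j))"

lemma sum_lt_mono_prefix:
  assumes "\<forall>i<n. 0 \<le> (a::nat\<Rightarrow>real) i" "(\<Sum>i<n. a i) < 1" "m \<le> n"
  shows "(\<Sum>i<m. a i) < 1"
proof -
  have "(\<Sum>i<m. a i) \<le> (\<Sum>i<n. a i)"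
    using assms by (intro sum_mono2) auto
  then show ?thesis using assms by simp
qed

lemma cfac_telescope:
  assumes "\<forall>i<n. 0 \<le> a i" "(\<Sum>i<n. a i) < 1"
  shows "(\<Prod>i<n. 1 - cfac a i) = 1 - (\<Sum>i<n. a i)"
  using assms
proof (induction n)
  case 0 then show ?case by simp
next
  case (Suc n)
  have h: "(\<Sum>i<n. a i) < 1" using sum_lt_mono_prefix[OF Suc.prems, of n] by simp
  then have IH: "(\<Prod>i<n. 1 - cfac a i) = 1 - (\<Sum>i<n. a i)" using Suc by auto
  have "(\<Prod>i<Suc n. 1 - cfac a i) = (1 - (\<Sum>i<n. a i)) * (1 - cfac a n)" by (simp add: IH)
  also have "\<dots> = 1 - (\<Sum>i<Suc n. a i)" using h by (simp add: cfac_def field_simps)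
  finally show ?case .
qed

lemma cfac_bounds:
  assumes "\<forall>i<n. 0 \<le> a i" "(\<Sum>i<n. a i) < 1" "i < n"
  shows "0 \<le> cfac a i" "cfac a i < 1"
proof -
  have h1: "(\<Sum>j<i. a j) < 1" using sum_lt_mono_prefix[OF assms(1,2), of i] assms by simp
  have h2: "(\<Sum>j<Suc i. a j) < 1" using sum_lt_mono_prefix[OF assms(1,2), of "Suc i"] assms by simp
  show "0 \<le> cfac a i" using h1 assms unfolding cfac_def by auto
  show "cfac a i < 1" using h1 h2 unfolding cfac_def by (simp add: divide_less_eq)
qed

lemma gem_partial: "(\<Sum>i<n. gem_map u i) = 1 - (\<Prod>i<n. 1 - u i)"
  by (induction n) (auto simp: gem_map_def algebra_simps)

lemma gem_at_cfac:
  assumes "\<forall>i<n. 0 \<le> a i" "(\<Sum>i<n. a i) < 1" "i < n"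
  shows "gem_map (cfac a) i = a i"
proof -
  have h1: "(\<Sum>j<i. a j) < 1" using sum_lt_mono_prefix[OF assms(1,2), of i] assms by simp
  have "(\<Prod>j<i. 1 - cfac a j) = 1 - (\<Sum>j<i. a j)"
    using assms h1 by (intro cfac_telescope) auto
  then show ?thesis using h1 by (simp add: gem_map_def cfac_def)
qed

lemma gem_nonneg: "(\<forall>j. 0 \<le> u j \<and> u j \<le> 1) \<Longrightarrow> 0 \<le> gem_map u i"
  unfolding gem_map_def by (auto intro!: mult_nonneg_nonneg prod_nonneg)

lemma gem_in_simplex:
  assumes "\<forall>j. 0 \<le> u j \<and> u j \<le> 1"
  shows "gem_map u \<in> gem_simplex"
proof -
  have b: "(\<Sum>i<n. gem_map u i) \<le> 1" for n
    using assms by (simp add: gem_partial prod_nonneg)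
  have s: "summable (gem_map u)"
    by (rule summableI_nonneg_bounded[OF gem_nonneg[OF assms] b])
  show ?thesis unfolding gem_simplex_def
    using s gem_nonneg[OF assms] suminf_le_const[OF s b] by auto
qed

lemma gem_upper_incl:
  fixes u a :: "nat \<Rightarrow> real" and n i :: nat
  assumes u: "\<forall>j. 0 \<le> u j \<and> u j \<le> 1"
    and a: "\<forall>i<n. 0 \<le> a i" "(\<Sum>i<n. a i) < 1"
    and ge: "\<forall>i<n. a i \<le> gem_map u i" and i: "i < n"
  shows "cfac a i \<le> u i"
proof -
  define Q where "Q = (\<Prod>j<i. 1 - u j)"
  have Q0: "0 \<le> Q" unfolding Q_def using u by (auto intro!: prod_nonneg)
  have "Q = 1 - (\<Sum>j<i. gem_map u j)" using gem_partial[of u i] unfolding Q_def by simp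
  moreover have "(\<Sum>j<i. a j) \<le> (\<Sum>j<i. gem_map u j)"
    using ge i by (intro sum_mono) auto
  ultimately have QD: "Q \<le> 1 - (\<Sum>j<i. a j)" by simp
  have h1: "(\<Sum>j<i. a j) < 1" using sum_lt_mono_prefix[OF a, of i] i by simp
  have gi: "a i \<le> Q * u i" using ge i unfolding gem_map_def Q_def by auto
  show ?thesis
  proof (cases "Q = 0")
    case True
    then have "a i = 0" using gi a i by force
    then show ?thesis using u by (simp add: cfac_def)
  next
    case False
    then have Qp: "0 < Q" using Q0 by simp
    have "cfac a i \<le> a i / Q"
      unfolding cfac_def using Qp QD a i by (intro divide_left_mono) auto
    also have "\<dots> \<le> u i" using gi Qp by (simp add: divide_le_eq mult.commute)
    finally show ?thesis .
  qed
qed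



lemma simplex_eq: "gem_simplex = {x. \<forall>k. 0 \<le> x k} \<inter> {x. \<forall>n. (\<Sum>i<n. x i) \<le> 1}"
proof (intro equalityI subsetI)
  fix x :: "nat \<Rightarrow> real" assume "x \<in> gem_simplex"
  then show "x \<in> {x. \<forall>k. 0 \<le> x k} \<inter> {x. \<forall>n. (\<Sum>i<n. x i) \<le> 1}"
  proof -
    have x: "\<forall>k. 0 \<le> x k" "summable x" "suminf x \<le> 1" using \<open>x \<in> gem_simplex\<close> unfolding gem_simplex_def by auto
    have "(\<Sum>i<n. x i) \<le> 1" for n
      using sum_le_suminf[of x "{..<n}"] x by fastforce
    then show ?thesis using x by blast
  qed
next
  fix x :: "nat \<Rightarrow> real" assume x: "x \<in> {x. \<forall>k. 0 \<le> x k} \<inter> {x. \<forall>n. (\<Sum>i<n. x i) \<le> 1}"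
  have x1: "\<And>k. 0 \<le> x k" and x2: "\<And>n. (\<Sum>i<n. x i) \<le> 1" using x by auto
  have s: "summable x" by (rule summableI_nonneg_bounded[of x, OF x1 x2])
  show "x \<in> gem_simplex" unfolding gem_simplex_def using x1 s suminf_le_const[OF s x2] by blast
qed

lemma closed_simplex: "closed gem_simplex"
  unfolding simplex_eq
  by (intro closed_Int closed_Collect_all closed_Collect_le continuous_intros continuous_on_product_coordinates) 

lemma simplex_borel: "gem_simplex \<in> sets borel"
  using closed_simplex by (rule borel_closed)

lemma compact_cube: "compact (PiE UNIV (\<lambda>_::nat. {0..1::real}))"
proof -
  have "compactin (product_topology (\<lambda>_::nat. euclidean) UNIV) (PiE UNIV (\<lambda>_::nat. {0..1::real}))"
    by (subst compactin_PiE) (simp add: compact_Icc)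
  then show ?thesis by (simp add: euclidean_product_topology)
qed

lemma simplex_sub_cube: "gem_simplex \<subseteq> PiE UNIV (\<lambda>_::nat. {0..1::real})"
proof
  fix x assume x: "x \<in> gem_simplex"
  have le1: "x k \<le> 1" for k
  proof -
    have "x k = (\<Sum>i\<in>{k}. x i)" by simp
    also have "\<dots> \<le> (\<Sum>i<Suc k. x i)" using x unfolding simplex_eq by (intro sum_mono2) auto
    also have "\<dots> \<le> 1" using x unfolding simplex_eq by blast
    finally show ?thesis .
  qed
  have "0 \<le> x k" for k using x unfolding gem_simplex_def by blast
  then show "x \<in> PiE UNIV (\<lambda>_::nat. {0..1::real})" using le1 by (simp add: PiE_UNIV_domain Pi_iff)
qed

lemma compact_simplex: "compact gem_simplex"
proof -
  have e: "PiE UNIV (\<lambda>_::nat. {0..1::real}) \<inter> gem_simplex = gem_simplex" using simplex_sub_cube by blast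
  show ?thesis using compact_Int_closed[OF compact_cube closed_simplex] unfolding e .
qed

lemma gem_measurable_borel: "gem_map \<in> measurable (PiM UNIV (\<lambda>_. borel :: real measure)) borel"
proof -
  have "(\<lambda>u. (\<Prod>i<n. 1 - u i) * u n) \<in> borel_measurable (PiM UNIV (\<lambda>_. borel :: real measure))" for n
    by measurable
  then show ?thesis
    unfolding gem_map_def by (rule measurable_coordinatewise_then_product)
qed

lemma gem_measurable: "gem_map \<in> measurable (PiM UNIV (\<lambda>_. M)) borel"
  if "sets M = sets (borel :: real measure)"
proof -
  have e: "sets (PiM UNIV (\<lambda>_. M)) = sets (PiM UNIV (\<lambda>_. borel :: real measure))"
    using that by (intro sets_PiM_cong) auto
  have eq: "measurable (PiM UNIV (\<lambda>_. M)) borel = measurable (PiM UNIV (\<lambda>_. borel :: real measure)) borel"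
    by (rule measurable_cong_sets[OF e refl])
  show ?thesis unfolding eq by (rule gem_measurable_borel)
qed



abbreviation PB :: "real \<Rightarrow> (nat \<Rightarrow> real) measure" where
  "PB \<theta> \<equiv> PiM UNIV (\<lambda>_::nat. beta1 \<theta>)"

lemma space_PB[simp]: "space (PB \<theta>) = UNIV"
  by (simp add: space_PiM PiE_UNIV_domain)

lemma prob_space_PB: "0 < \<theta> \<Longrightarrow> prob_space (PB \<theta>)"
  by (intro prob_space_PiM prob_space_beta1)

lemma prob_space_gem: "0 < \<theta> \<Longrightarrow> prob_space (gem_law \<theta>)"
  unfolding gem_law_def
  by (intro prob_space.prob_space_distr prob_space_PB gem_measurable) simp_all

lemma gem_law_measure:
  assumes "S \<in> sets borel"
  shows "measure (gem_law \<theta>) S = measure (PB \<theta>) (gem_map -` S)"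
  unfolding gem_law_def
  by (subst measure_distr[OF gem_measurable assms]) simp_all

lemma sets_gem_law[simp]: "sets (gem_law \<theta>) = sets borel"
  by (simp add: gem_law_def)

lemma box_eq: "{u. \<forall>i<n. u i \<in> A i} = prod_emb UNIV (\<lambda>_. beta1 \<theta>) {..<n} (PiE {..<n} A)"
proof -
  have u: "PiE UNIV (\<lambda>i::nat. space (beta1 \<theta>)) = UNIV" by (simp add: PiE_UNIV_domain)
  show ?thesis unfolding prod_emb_def u by (simp add: restrict_PiE_iff set_eq_iff Pi_iff) blast
qed

lemma box_sets: assumes "\<And>i. A i \<in> sets borel" shows "{u. \<forall>i<n. u i \<in> A i} \<in> sets (PB \<theta>)"
  unfolding box_eq[of n A \<theta>] using assms by (intro sets_PiM_I) auto

lemma prod_box: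
  assumes th: "0 < \<theta>" and A: "\<And>i. A i \<in> sets borel"
  shows "measure (PB \<theta>) {u. \<forall>i<n. u i \<in> A i} = (\<Prod>i<n. measure (beta1 \<theta>) (A i))"
proof -
  note e = box_eq[of n A \<theta>]
  have "emeasure (PB \<theta>) {u. \<forall>i<n. u i \<in> A i} = (\<Prod>i<n. emeasure (beta1 \<theta>) (A i))"
    unfolding e using th A by (intro emeasure_PiM_emb prob_space_beta1) auto
  also have "\<dots> = (\<Prod>i<n. ennreal (measure (beta1 \<theta>) (A i)))"
    using prob_space_beta1[OF th] by (intro prod.cong refl) (simp add: finite_measure.emeasure_eq_measure prob_space.finite_measure A)
  also have "\<dots> = ennreal (\<Prod>i<n. measure (beta1 \<theta>) (A i))"
    by (intro prod_ennreal) simp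
  finally show ?thesis by (simp add: measure_def prod_nonneg)
qed

lemma AE_beta1: "AE x in beta1 \<theta>. 0 < x \<and> x < 1"
proof (rule AE_I[where N="- {0<..<1}"])
  show "{x \<in> space (beta1 \<theta>). \<not> (0 < x \<and> x < 1)} \<subseteq> - {0<..<1}" by auto
  show "emeasure (beta1 \<theta>) (- {0<..<1}) = 0"
    using beta1_restrict[of "- {0<..<1}" \<theta>] by simp
  show "- {0<..<1} \<in> sets (beta1 \<theta>)" by simp
qed

lemma AE_PB: assumes "0 < \<theta>" shows "AE u in PB \<theta>. \<forall>j. 0 < u j \<and> u j < 1"
proof -
  have "AE u in PB \<theta>. 0 < u j \<and> u j < 1" for j
    by (rule AE_PiM_component[where M="\<lambda>_. beta1 \<theta>" and I=UNIV and P="\<lambda>x. 0 < x \<and> x < 1"])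
       (rule prob_space_beta1[OF assms], simp, rule AE_beta1)
  then show ?thesis by (subst AE_all_countable) blast
qed



lemma coord_cont: "continuous (at x) (\<lambda>y::nat\<Rightarrow>real. y i)"
  using continuous_on_product_coordinates[of i] continuous_on_eq_continuous_at[OF open_UNIV] by blast

lemma closed_box: "(\<And>i. closed (C i)) \<Longrightarrow> closed {y::nat\<Rightarrow>real. \<forall>i<n. y i \<in> C i}"
proof -
  assume c: "\<And>i. closed (C i)"
  have "{y::nat\<Rightarrow>real. \<forall>i<n. y i \<in> C i} = (\<Inter>i\<in>{..<n}. (\<lambda>y. y i) -` C i)" by auto
  moreover have "closed (\<Inter>i\<in>{..<n}. (\<lambda>y::nat\<Rightarrow>real. y i) -` C i)"
    by (intro closed_INT ballI continuous_closed_vimage c coord_cont)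
  ultimately show ?thesis by simp
qed

lemma measure_mono_AE_prob:
  assumes "prob_space M" "AE x in M. x \<in> A \<longrightarrow> x \<in> B" "B \<in> sets M"
  shows "measure M A \<le> measure M B"
proof (cases "A \<in> sets M")
  case True
  interpret prob_space M by fact
  have "emeasure M A \<le> emeasure M B" by (rule emeasure_mono_AE[OF assms(2,3)])
  then show ?thesis using True assms(3) by (simp add: emeasure_eq_measure)
next
  case False
  then show ?thesis by (simp add: measure_notin_sets)
qed

lemma upper_box:
  assumes th: "0 < \<theta>" and a: "\<forall>i<n. 0 \<le> a i" "(\<Sum>i<n. a i) < 1"
  shows "measure (gem_law \<theta>) {y. \<forall>i<n. a i \<le> y i} \<le> (1 - (\<Sum>i<n. a i)) powr \<theta>"
proof -
  let ?S = "{y::nat\<Rightarrow>real. \<forall>i<n. a i \<le> y i}"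
  let ?B = "{u::nat\<Rightarrow>real. \<forall>i<n. u i \<in> {cfac a i..}}"
  have "?S = {y::nat\<Rightarrow>real. \<forall>i<n. y i \<in> {a i..}}" by auto
  then have "closed ?S" using closed_box[of "\<lambda>i. {a i..}" n] by simp
  then have Sb: "?S \<in> sets borel" by (rule borel_closed)
  have "measure (gem_law \<theta>) ?S = measure (PB \<theta>) (gem_map -` ?S)"
    by (rule gem_law_measure[OF Sb])
  also have "\<dots> \<le> measure (PB \<theta>) ?B"
  proof (rule measure_mono_AE_prob[OF prob_space_PB[OF th]])
    show "?B \<in> sets (PB \<theta>)" by (rule box_sets) simp
    show "AE x in PB \<theta>. x \<in> gem_map -` ?S \<longrightarrow> x \<in> ?B"
      using AE_PB[OF th]
    proof (rule AE_mp, intro AE_I2 impI)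
      fix u :: "nat \<Rightarrow> real"
      assume u: "\<forall>j. 0 < u j \<and> u j < 1" and "u \<in> gem_map -` ?S"
      then have ge: "\<forall>i<n. a i \<le> gem_map u i" by simp
      have u': "\<forall>j. 0 \<le> u j \<and> u j \<le> 1" using u by (simp add: less_imp_le)
      show "u \<in> ?B" using gem_upper_incl[OF u' a ge] by simp
    qed
  qed
  also have "\<dots> = (\<Prod>i<n. measure (beta1 \<theta>) {cfac a i..})"
    by (rule prod_box[OF th]) simp
  also have "\<dots> \<le> (\<Prod>i<n. (1 - cfac a i) powr \<theta>)"
    by (intro prod_mono conjI measure_nonneg beta1_ge th cfac_bounds[OF a]) simp_all
  also have "\<dots> = (\<Prod>i<n. 1 - cfac a i) powr \<theta>"
    by (rule prod_powr_distrib[symmetric])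
  also have "\<dots> = (1 - (\<Sum>i<n. a i)) powr \<theta>"
    using cfac_telescope[OF a] by simp
  finally show ?thesis .
qed



lemma mult_diff_bound:
  fixes a b c d :: real
  assumes "0 \<le> b" "b \<le> 1" "0 \<le> c" "c \<le> 1"
  shows "\<bar>a * c - b * d\<bar> \<le> \<bar>a - b\<bar> + \<bar>c - d\<bar>"
proof -
  have "a * c - b * d = (a - b) * c + b * (c - d)" by (simp add: algebra_simps)
  then have "\<bar>a * c - b * d\<bar> \<le> \<bar>a - b\<bar> * \<bar>c\<bar> + \<bar>b\<bar> * \<bar>c - d\<bar>"
    by (metis abs_mult abs_triangle_ineq)
  also have "\<dots> \<le> \<bar>a - b\<bar> * 1 + 1 * \<bar>c - d\<bar>"
    using assms by (intro add_mono mult_mono) auto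
  finally show ?thesis by simp
qed

lemma prod_lip:
  fixes u v :: "nat \<Rightarrow> real"
  assumes "\<forall>j<i. 0 \<le> u j \<and> u j \<le> 1" "\<forall>j<i. 0 \<le> v j \<and> v j \<le> 1"
  shows "\<bar>(\<Prod>j<i. 1 - u j) - (\<Prod>j<i. 1 - v j)\<bar> \<le> (\<Sum>j<i. \<bar>u j - v j\<bar>)"
  using assms
proof (induction i)
  case 0 then show ?case by simp
next
  case (Suc i)
  have IH: "\<bar>(\<Prod>j<i. 1 - u j) - (\<Prod>j<i. 1 - v j)\<bar> \<le> (\<Sum>j<i. \<bar>u j - v j\<bar>)"
    using Suc by auto
  have q: "0 \<le> (\<Prod>j<i. 1 - v j)" "(\<Prod>j<i. 1 - v j) \<le> 1"
    "0 \<le> (\<Prod>j<i. 1 - u j)" "(\<Prod>j<i. 1 - u j) \<le> 1"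
    using Suc.prems by (auto intro!: prod_nonneg prod_le_1)
  have "\<bar>(\<Prod>j<Suc i. 1 - u j) - (\<Prod>j<Suc i. 1 - v j)\<bar>
      = \<bar>(1 - u i) * (\<Prod>j<i. 1 - u j) - (1 - v i) * (\<Prod>j<i. 1 - v j)\<bar>"
    by (simp add: mult.commute)
  also have "\<dots> \<le> \<bar>(1 - u i) - (1 - v i)\<bar> + \<bar>(\<Prod>j<i. 1 - u j) - (\<Prod>j<i. 1 - v j)\<bar>"
    using Suc.prems q by (intro mult_diff_bound) auto
  also have "\<dots> \<le> \<bar>u i - v i\<bar> + (\<Sum>j<i. \<bar>u j - v j\<bar>)" using IH by simp
  finally show ?case by simp
qed

lemma gem_lip:
  fixes u v :: "nat \<Rightarrow> real"
  assumes "\<forall>j\<le>i. 0 \<le> u j \<and> u j \<le> 1" "\<forall>j\<le>i. 0 \<le> v j \<and> v j \<le> 1"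
  shows "\<bar>gem_map u i - gem_map v i\<bar> \<le> (\<Sum>j<Suc i. \<bar>u j - v j\<bar>)"
proof -
  have q: "0 \<le> u i" "u i \<le> 1" using assms by auto
  have "\<bar>gem_map u i - gem_map v i\<bar> = \<bar>u i * (\<Prod>j<i. 1 - u j) - v i * (\<Prod>j<i. 1 - v j)\<bar>"
    by (simp add: gem_map_def mult.commute)
  also have "\<dots> \<le> \<bar>u i - v i\<bar> + \<bar>(\<Prod>j<i. 1 - u j) - (\<Prod>j<i. 1 - v j)\<bar>"
    using assms by (intro mult_diff_bound) (auto intro!: prod_nonneg prod_le_1)
  also have "\<dots> \<le> \<bar>u i - v i\<bar> + (\<Sum>j<i. \<bar>u j - v j\<bar>)"
    using assms by (intro add_left_mono prod_lip) auto
  finally show ?thesis by simp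
qed

lemma lower_box:
  fixes x :: "nat \<Rightarrow> real"
  assumes th: "0 < \<theta>" and x: "\<forall>i<n. 0 \<le> x i" "(\<Sum>i<n. x i) < 1"
    and eta: "0 < \<eta>" "real n * \<eta> < \<epsilon>"
    and T: "T \<in> sets borel" "\<And>y. y \<in> gem_simplex \<Longrightarrow> (\<forall>i<n. \<bar>y i - x i\<bar> < \<epsilon>) \<Longrightarrow> y \<in> T"
  shows "(\<Prod>i<n. (1 - cfac x i) powr \<theta> - (1 - min (cfac x i + \<eta>) 1) powr \<theta>) \<le> measure (gem_law \<theta>) T"
proof -
  define v where "v = cfac x"
  define b where "b i = min (v i + \<eta>) 1" for i
  have vb: "0 \<le> v i" "v i < 1" if "i < n" for i
    using cfac_bounds[OF x that] unfolding v_def by auto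
  have vb2: "v i < b i" "b i \<le> 1" if "i < n" for i
    using vb[OF that] eta unfolding b_def by auto
  let ?E = "{u::nat\<Rightarrow>real. \<forall>i<n. u i \<in> {v i<..<b i}}"
  have "(\<Prod>i<n. (1 - v i) powr \<theta> - (1 - b i) powr \<theta>) = (\<Prod>i<n. measure (beta1 \<theta>) {v i<..<b i})"
    using vb vb2 th by (intro prod.cong refl beta1_interval_measure[symmetric]) auto
  also have "\<dots> = measure (PB \<theta>) ?E"
    by (rule prod_box[OF th, symmetric]) simp
  also have "\<dots> \<le> measure (PB \<theta>) (gem_map -` T)"
  proof (rule measure_mono_AE_prob[OF prob_space_PB[OF th]])
    show "gem_map -` T \<in> sets (PB \<theta>)"
      using measurable_sets[OF gem_measurable[of "beta1 \<theta>"] T(1)] by simp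
    show "AE u in PB \<theta>. u \<in> ?E \<longrightarrow> u \<in> gem_map -` T"
      using AE_PB[OF th]
    proof (rule AE_mp, intro AE_I2 impI)
      fix u :: "nat \<Rightarrow> real"
      assume u: "\<forall>j. 0 < u j \<and> u j < 1" and E: "u \<in> ?E"
      have u': "\<forall>j. 0 \<le> u j \<and> u j \<le> 1" using u by (simp add: less_imp_le)
      have "\<bar>gem_map u i - x i\<bar> < \<epsilon>" if i: "i < n" for i
      proof -
        have "gem_map v i = x i" unfolding v_def using gem_at_cfac[OF x i] .
        moreover have "\<bar>gem_map u i - gem_map v i\<bar> \<le> (\<Sum>j<Suc i. \<bar>u j - v j\<bar>)"
        proof (rule gem_lip)
          show "\<forall>j\<le>i. 0 \<le> u j \<and> u j \<le> 1" using u' by simp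
          show "\<forall>j\<le>i. 0 \<le> v j \<and> v j \<le> 1" using vb i by (meson le_less_trans less_imp_le)
        qed
        moreover have "(\<Sum>j<Suc i. \<bar>u j - v j\<bar>) \<le> (\<Sum>j<Suc i. \<eta>)"
        proof (intro sum_mono)
          fix j assume "j \<in> {..<Suc i}"
          then have j: "j < n" using i by auto
          then show "\<bar>u j - v j\<bar> \<le> \<eta>" using E vb[OF j] unfolding b_def by auto
        qed
        moreover have "(\<Sum>j<Suc i. \<eta>) \<le> real n * \<eta>" using i eta by simp
        ultimately show ?thesis using eta by linarith
      qed
      then show "u \<in> gem_map -` T" using T(2)[OF gem_in_simplex[OF u']] by simp
    qed
  qed
  also have "\<dots> = measure (gem_law \<theta>) T" by (rule gem_law_measure[OF T(1), symmetric])
  finally show ?thesis unfolding v_def b_def .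
qed



lemma tendsto_C_div: "((\<lambda>\<theta>::real. ereal (C / \<theta> + q)) \<longlongrightarrow> ereal q) at_top"
proof -
  have "((\<lambda>\<theta>::real. C / \<theta>) \<longlongrightarrow> 0) at_top"
    by (intro tendsto_divide_0[OF tendsto_const] filterlim_at_top_imp_at_infinity filterlim_ident)
  then have "((\<lambda>\<theta>::real. C / \<theta> + q) \<longlongrightarrow> 0 + q) at_top" by (intro tendsto_add) auto
  then show ?thesis by (simp add: tendsto_ereal)
qed

lemma liminf_lower:
  fixes m :: "real \<Rightarrow> real"
  assumes ev: "eventually (\<lambda>\<theta>. C * q powr \<theta> \<le> m \<theta>) at_top" and C: "0 < C" and q: "0 < q"
  shows "ereal (ln q) \<le> Liminf at_top (\<lambda>\<theta>. ereal (1/\<theta>) * elog (m \<theta>))"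
proof -
  have "eventually (\<lambda>\<theta>. ereal (ln C / \<theta> + ln q) \<le> ereal (1/\<theta>) * elog (m \<theta>)) at_top"
    using ev eventually_gt_at_top[of 0]
  proof eventually_elim
    case (elim \<theta>)
    have pos: "0 < C * q powr \<theta>" using C q by simp
    then have mp: "0 < m \<theta>" using elim by linarith
    have "ln (C * q powr \<theta>) \<le> ln (m \<theta>)" using pos elim by simp
    then have "ln C + \<theta> * ln q \<le> ln (m \<theta>)" using C q by (simp add: ln_mult ln_powr)
    then have "(ln C + \<theta> * ln q) / \<theta> \<le> ln (m \<theta>) / \<theta>" using elim by (intro divide_right_mono) auto
    then have "ln C / \<theta> + ln q \<le> 1 / \<theta> * ln (m \<theta>)" using elim by (simp add: add_divide_distrib)
    then show ?case using mp by (simp add: elog_def)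
  qed
  then have "Liminf at_top (\<lambda>\<theta>. ereal (ln C / \<theta> + ln q)) \<le> Liminf at_top (\<lambda>\<theta>. ereal (1/\<theta>) * elog (m \<theta>))"
    by (rule Liminf_mono)
  moreover have "Liminf at_top (\<lambda>\<theta>::real. ereal (ln C / \<theta> + ln q)) = ereal (ln q)"
    by (rule lim_imp_Liminf[OF trivial_limit_at_top_linorder tendsto_C_div])
  ultimately show ?thesis by simp
qed

lemma limsup_upper:
  fixes m :: "real \<Rightarrow> real"
  assumes ev: "\<And>\<theta>. 0 < \<theta> \<Longrightarrow> m \<theta> \<le> C * exp (- s * \<theta>)" and C: "0 < C"
  shows "Limsup at_top (\<lambda>\<theta>. ereal (1/\<theta>) * elog (m \<theta>)) \<le> ereal (- s)"
proof -
  have "eventually (\<lambda>\<theta>. ereal (1/\<theta>) * elog (m \<theta>) \<le> ereal (ln C / \<theta> + - s)) at_top"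
    using eventually_gt_at_top[of 0]
  proof eventually_elim
    case (elim \<theta>)
    show ?case
    proof (cases "0 < m \<theta>")
      case True
      have "ln (m \<theta>) \<le> ln (C * exp (- s * \<theta>))" using True ev[OF elim] by simp
      then have "ln (m \<theta>) \<le> ln C - s * \<theta>" using C by (simp add: ln_mult)
      then have "ln (m \<theta>) / \<theta> \<le> (ln C - s * \<theta>) / \<theta>" using elim by (intro divide_right_mono) auto
      then have "1 / \<theta> * ln (m \<theta>) \<le> ln C / \<theta> + - s" using elim by (simp add: diff_divide_distrib)
      then show ?thesis using True by (simp add: elog_def)
    next
      case False
      then show ?thesis using elim by (simp add: elog_def)
    qed
  qed
  then have "Limsup at_top (\<lambda>\<theta>. ereal (1/\<theta>) * elog (m \<theta>)) \<le> Limsup at_top (\<lambda>\<theta>. ereal (ln C / \<theta> + - s))"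
    by (rule Limsup_mono)
  moreover have "Limsup at_top (\<lambda>\<theta>::real. ereal (ln C / \<theta> + - s)) = ereal (- s)"
    by (rule lim_imp_Limsup[OF trivial_limit_at_top_linorder tendsto_C_div])
  ultimately show ?thesis by simp
qed



lemma open_nbhd:
  fixes V :: "(nat \<Rightarrow> real) set"
  assumes "open V" "x \<in> V"
  obtains n \<epsilon> where "0 < \<epsilon>" "\<And>y. (\<forall>i<n. \<bar>y i - x i\<bar> < \<epsilon>) \<Longrightarrow> y \<in> V"
proof -
  have "openin (product_topology (\<lambda>i. euclidean) UNIV) V" using assms(1) unfolding open_fun_def .
  from product_topology_open_contains_basis[OF this assms(2)]
  obtain X where H: "x \<in> PiE UNIV X" "\<And>i. open (X i)" "finite {i. X i \<noteq> UNIV}" "PiE UNIV X \<subseteq> V"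
    by auto
  have "\<exists>e>0. \<forall>t. \<bar>t - x i\<bar> < e \<longrightarrow> t \<in> X i" for i
  proof -
    have "x i \<in> X i" using H(1) by (simp add: PiE_UNIV_domain Pi_iff)
    then show ?thesis using H(2)[of i] unfolding open_dist dist_real_def by blast
  qed
  then obtain e where e: "\<And>i. 0 < e i" "\<And>i t. \<bar>t - x i\<bar> < e i \<Longrightarrow> t \<in> X i" by metis
  define J where "J = {i. X i \<noteq> UNIV}"
  obtain n where n: "J \<subseteq> {..<n}" using finite_nat_bounded H(3) unfolding J_def by blast
  define \<epsilon> where "\<epsilon> = Min (insert 1 (e ` J))"
  have fin: "finite (insert 1 (e ` J))" using H(3) unfolding J_def by simp
  have ep: "0 < \<epsilon>" unfolding \<epsilon>_def using fin e(1) by (subst Min_gr_iff) auto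
  have ele: "\<epsilon> \<le> e i" if "i \<in> J" for i unfolding \<epsilon>_def using fin that by (intro Min_le) auto
  show ?thesis
  proof (rule that[OF ep])
    fix y assume y: "\<forall>i<n. \<bar>y i - x i\<bar> < \<epsilon>"
    have "y i \<in> X i" for i
    proof (cases "i \<in> J")
      case True
      then have "\<bar>y i - x i\<bar> < e i" using y n ele[OF True] by force
      then show ?thesis by (rule e(2))
    next
      case False then show ?thesis unfolding J_def by simp
    qed
    then have "y \<in> PiE UNIV X" by (simp add: PiE_UNIV_domain Pi_iff)
    then show "y \<in> V" using H(4) by blast
  qed
qed

lemma powr_small_ev:
  fixes r :: real
  assumes "0 \<le> r" "r < 1"
  shows "eventually (\<lambda>\<theta>. r powr \<theta> \<le> 1/2) at_top"
proof (cases "r = 0")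
  case True then show ?thesis by simp
next
  case False
  then have r: "0 < r" using assms by simp
  have lr: "ln r < 0" using r assms by simp
  define t0 where "t0 = ln (1/2) / ln r"
  show ?thesis
  proof (rule eventually_at_top_linorderI[of t0])
    fix \<theta> assume "t0 \<le> \<theta>"
    then have "\<theta> * ln r \<le> t0 * ln r" using lr by (simp add: mult_right_mono_neg)
    also have "t0 * ln r = ln (1/2)" unfolding t0_def using lr by simp
    finally have "\<theta> * ln r \<le> ln (1/2)" .
    then have "exp (\<theta> * ln r) \<le> exp (ln (1/2))" by (simp only: exp_le_cancel_iff)
    then show "r powr \<theta> \<le> 1/2" using r by (simp add: powr_def)
  qed
qed

lemma factor_ev:
  fixes v b :: real
  assumes "0 \<le> v" "v < b" "b \<le> 1"
  shows "eventually (\<lambda>\<theta>. (1/2) * (1 - v) powr \<theta> \<le> (1 - v) powr \<theta> - (1 - b) powr \<theta>) at_top"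
proof -
  define r where "r = (1 - b) / (1 - v)"
  have r: "0 \<le> r" "r < 1" using assms unfolding r_def by (auto simp: divide_less_eq)
  have rb: "1 - b = r * (1 - v)" unfolding r_def using assms by simp
  show ?thesis using powr_small_ev[OF r]
  proof eventually_elim
    case (elim \<theta>)
    have "(1 - b) powr \<theta> = r powr \<theta> * (1 - v) powr \<theta>" unfolding rb by (rule powr_mult)
    also have "\<dots> \<le> (1/2) * (1 - v) powr \<theta>" using elim by (intro mult_right_mono) auto
    finally show ?case by simp
  qed
qed

lemma lower_point:
  assumes x: "x \<in> gem_simplex" "suminf x < 1" and V: "open V" "x \<in> V"
  shows "ereal (ln (1 - suminf x)) \<le>
    Liminf at_top (\<lambda>\<theta>::real. ereal (1 / \<theta>) * elog (measure (gem_law \<theta>) (V \<inter> gem_simplex)))"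
proof -
  obtain n \<epsilon> where ep: "0 < \<epsilon>" and nb: "\<And>y. (\<forall>i<n. \<bar>y i - x i\<bar> < \<epsilon>) \<Longrightarrow> y \<in> V"
    using open_nbhd[OF V] by blast
  define \<eta> where "\<eta> = \<epsilon> / (real n + 1)"
  have eta: "0 < \<eta>" "real n * \<eta> < \<epsilon>" unfolding \<eta>_def using ep by (auto simp: field_simps)
  have xs: "\<forall>k. 0 \<le> x k" "summable x" using x(1) unfolding gem_simplex_def by auto
  have psum: "(\<Sum>i<n. x i) \<le> suminf x" using sum_le_suminf[of x "{..<n}"] xs by fastforce
  have xn: "\<forall>i<n. 0 \<le> x i" "(\<Sum>i<n. x i) < 1" using xs psum x(2) by auto
  define v where "v = cfac x"
  define b where "b i = min (v i + \<eta>) 1" for i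
  have vb: "0 \<le> v i" "v i < b i" "b i \<le> 1" if "i < n" for i
    using cfac_bounds[OF xn that] eta unfolding v_def b_def by auto
  let ?T = "V \<inter> gem_simplex"
  have Tb: "?T \<in> sets borel" using borel_open[OF V(1)] simplex_borel by (rule sets.Int)
  have low: "(\<Prod>i<n. (1 - v i) powr \<theta> - (1 - b i) powr \<theta>) \<le> measure (gem_law \<theta>) ?T" if "0 < \<theta>" for \<theta>
    unfolding v_def b_def using nb by (intro lower_box[OF that xn eta Tb]) auto
  have ev: "eventually (\<lambda>\<theta>. \<forall>i\<in>{..<n}. (1/2) * (1 - v i) powr \<theta> \<le> (1 - v i) powr \<theta> - (1 - b i) powr \<theta>) at_top"
    using vb by (intro eventually_ball_finite ballI factor_ev) auto
  have "eventually (\<lambda>\<theta>. (1/2)^n * (1 - suminf x) powr \<theta> \<le> measure (gem_law \<theta>) ?T) at_top"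
    using ev eventually_gt_at_top[of 0]
  proof eventually_elim
    case (elim \<theta>)
    have "(1/2)^n * (1 - suminf x) powr \<theta> \<le> (1/2)^n * (1 - (\<Sum>i<n. x i)) powr \<theta>"
      using x(2) psum elim by (intro mult_left_mono powr_mono2) auto
    also have "(1 - (\<Sum>i<n. x i)) = (\<Prod>i<n. 1 - v i)" unfolding v_def using cfac_telescope[OF xn] by simp
    also have "(1/2)^n * (\<Prod>i<n. 1 - v i) powr \<theta> = (\<Prod>i<n. (1/2) * (1 - v i) powr \<theta>)"
      by (simp only: prod_powr_distrib prod.distrib prod_constant card_lessThan)
    also have "\<dots> \<le> (\<Prod>i<n. (1 - v i) powr \<theta> - (1 - b i) powr \<theta>)"
      using elim by (intro prod_mono) auto
    also have "\<dots> \<le> measure (gem_law \<theta>) ?T" using low elim by auto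
    finally show ?case .
  qed
  then show ?thesis by (rule liminf_lower) (use x(2) in auto)
qed



lemma upper_point:
  assumes x: "x \<in> gem_simplex" and s: "0 \<le> s" and rate: "ereal s < gem_rate x"
  shows "\<exists>N T. open N \<and> x \<in> N \<and> T \<in> sets borel \<and> N \<inter> gem_simplex \<subseteq> T \<and>
           (\<forall>\<theta>>0. measure (gem_law \<theta>) T \<le> exp (- s * \<theta>))"
proof -
  have xs: "\<forall>k. 0 \<le> x k" "summable x" "suminf x \<le> 1" using x unfolding gem_simplex_def by auto
  have es: "0 < exp (- s)" "exp (- s) \<le> 1" using s by auto
  have big: "1 - exp (- s) < suminf x"
  proof (cases "suminf x < 1")
    case True
    then have "s < ln (1 / (1 - suminf x))" using rate x by (simp add: gem_rate_def)
    then have "exp s < 1 / (1 - suminf x)" using True by (metis exp_less_cancel_iff exp_ln divide_pos_pos diff_gt_0_iff_gt zero_less_one)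
    then have "exp s * (1 - suminf x) < 1" using True by (simp add: less_divide_eq)
    then have "1 - suminf x < exp (- s)" by (simp add: exp_minus field_simps)
    then show ?thesis by simp
  next
    case False then show ?thesis using es(1) by linarith
  qed
  have "eventually (\<lambda>n. 1 - exp (- s) < (\<Sum>i<n. x i)) sequentially"
    using order_tendstoD(1)[OF summable_LIMSEQ[OF xs(2)] big] .
  then obtain n where pn: "1 - exp (- s) < (\<Sum>i<n. x i)" by (auto simp: eventually_sequentially)
  define p where "p = (\<Sum>i<n. x i)"
  have pn': "1 - exp (- s) < p" using pn unfolding p_def .
  have p1: "p \<le> 1" unfolding p_def using sum_le_suminf[of x "{..<n}"] xs by fastforce
  have p0: "0 < p" using pn' es(2) by linarith
  define r where "r = (1 - exp (- s) + p) / (2 * p)"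
  have "0 < 1 - exp (- s) + p" using es(2) p0 by linarith
  then have r0: "0 < r" unfolding r_def using p0 by (intro divide_pos_pos) auto
  have r1: "r < 1" unfolding r_def using p0 pn' by (simp add: divide_less_eq)
  define a where "a i = r * x i" for i
  have "(\<Sum>i<n. a i) = r * p" unfolding a_def p_def by (simp add: sum_distrib_left)
  also have "r * p = (1 - exp (- s) + p) / 2" unfolding r_def using p0 by simp
  finally have A: "(\<Sum>i<n. a i) = (1 - exp (- s) + p) / 2" .
  have an1: "\<forall>i<n. 0 \<le> a i" using r0 xs(1) unfolding a_def by simp
  have an2: "(\<Sum>i<n. a i) < 1" proof -
    have "p < 1 + exp (- s)" using p1 exp_gt_zero[of "- s"] by linarith
    then show ?thesis unfolding A by (simp add: field_simps)
  qed
  note an = an1 an2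
  have Ab: "0 \<le> 1 - (\<Sum>i<n. a i)" "1 - (\<Sum>i<n. a i) \<le> exp (- s)" using an(2) unfolding A using pn' by (simp_all add: field_simps)
  define I where "I = {i. i < n \<and> 0 < x i}"
  define N where "N = {f::nat\<Rightarrow>real. \<forall>i\<in>I. f i \<in> {r * x i<..}}"
  define T where "T = {y::nat\<Rightarrow>real. \<forall>i<n. a i \<le> y i}"
  have "open N" unfolding N_def I_def
    by (rule product_topology_basis'[where x="\<lambda>i. i" and U="\<lambda>i. {r * x i<..}"]) auto
  moreover have "x \<in> N" unfolding N_def I_def using r1 by auto
  moreover have "T \<in> sets borel"
  proof -
    have "T = {y::nat\<Rightarrow>real. \<forall>i<n. y i \<in> {a i..}}" unfolding T_def by auto
    then have "closed T" using closed_box[of "\<lambda>i. {a i..}" n] by simp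
    then show ?thesis by (rule borel_closed)
  qed
  moreover have "N \<inter> gem_simplex \<subseteq> T"
  proof
    fix y assume y: "y \<in> N \<inter> gem_simplex"
    have "a i \<le> y i" if i: "i < n" for i
    proof (cases "0 < x i")
      case True then show ?thesis using y i unfolding N_def I_def a_def by auto
    next
      case False then have "x i = 0" using xs(1) by (metis order.order_iff_strict)
      then show ?thesis using y unfolding a_def gem_simplex_def by auto
    qed
    then show "y \<in> T" unfolding T_def by auto
  qed
  moreover have "measure (gem_law \<theta>) T \<le> exp (- s * \<theta>)" if th: "0 < \<theta>" for \<theta>
  proof -
    have "measure (gem_law \<theta>) T \<le> (1 - (\<Sum>i<n. a i)) powr \<theta>"
      unfolding T_def by (rule upper_box[OF th an])
    also have "\<dots> \<le> exp (- s) powr \<theta>"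
      using Ab th by (intro powr_mono2) auto
    also have "\<dots> = exp (- s * \<theta>)" by (simp add: powr_def)
    finally show ?thesis .
  qed
  ultimately show ?thesis by blast
qed



lemma upper_closed:
  assumes F: "closedin (top_of_set gem_simplex) F" and s: "0 \<le> s"
    and sc: "ereal s < (INF x\<in>F. gem_rate x)"
  shows "Limsup at_top (\<lambda>\<theta>::real. ereal (1 / \<theta>) * elog (measure (gem_law \<theta>) F)) \<le> ereal (- s)"
proof -
  obtain C where C: "closed C" "F = gem_simplex \<inter> C" using F unfolding closedin_closed by blast
  have Fc: "compact F" unfolding C(2) by (rule compact_Int_closed[OF compact_simplex C(1)])
  have FD: "F \<subseteq> gem_simplex" unfolding C(2) by blast
  have "\<forall>x\<in>F. \<exists>N T. open N \<and> x \<in> N \<and> T \<in> sets borel \<and> N \<inter> gem_simplex \<subseteq> T \<and>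
           (\<forall>\<theta>>0. measure (gem_law \<theta>) T \<le> exp (- s * \<theta>))"
  proof
    fix x assume x: "x \<in> F"
    have "ereal s < gem_rate x" using sc INF_lower[OF x, of gem_rate] by (rule less_le_trans)
    then show "\<exists>N T. open N \<and> x \<in> N \<and> T \<in> sets borel \<and> N \<inter> gem_simplex \<subseteq> T \<and>
           (\<forall>\<theta>>0. measure (gem_law \<theta>) T \<le> exp (- s * \<theta>))"
      using upper_point[OF _ s] x FD by blast
  qed
  then obtain N T where NT: "\<And>x. x \<in> F \<Longrightarrow> open (N x)" "\<And>x. x \<in> F \<Longrightarrow> x \<in> N x"
    "\<And>x. x \<in> F \<Longrightarrow> T x \<in> sets borel" "\<And>x. x \<in> F \<Longrightarrow> N x \<inter> gem_simplex \<subseteq> T x"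
    "\<And>x \<theta>. x \<in> F \<Longrightarrow> 0 < \<theta> \<Longrightarrow> measure (gem_law \<theta>) (T x) \<le> exp (- s * \<theta>)"
    by metis
  have "F \<subseteq> (\<Union>x\<in>F. N x)" using NT(2) by blast
  then obtain K where K: "K \<subseteq> F" "finite K" "F \<subseteq> (\<Union>x\<in>K. N x)"
    using compactE_image[OF Fc, of F N] NT(1) by metis
  have FT: "F \<subseteq> (\<Union>x\<in>K. T x)" using K(1,3) FD NT(4) by blast
  have bound: "measure (gem_law \<theta>) F \<le> real (card K + 1) * exp (- s * \<theta>)" if th: "0 < \<theta>" for \<theta>
  proof -
    interpret prob_space "gem_law \<theta>" by (rule prob_space_gem[OF th])
    have Tsets: "T ` K \<subseteq> sets (gem_law \<theta>)" using K(1) NT(3) by auto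
    have "measure (gem_law \<theta>) F \<le> measure (gem_law \<theta>) (\<Union>x\<in>K. T x)"
      using FT Tsets K(2) by (intro finite_measure_mono) auto
    also have "\<dots> \<le> (\<Sum>x\<in>K. measure (gem_law \<theta>) (T x))"
      by (rule finite_measure_subadditive_finite[OF K(2) Tsets])
    also have "\<dots> \<le> (\<Sum>x\<in>K. exp (- s * \<theta>))"
      using K(1) NT(5) th by (intro sum_mono) auto
    also have "\<dots> \<le> real (card K + 1) * exp (- s * \<theta>)" by simp
    finally show ?thesis .
  qed
  show ?thesis by (rule limsup_upper[OF bound]) auto
qed

lemma limsup_le0:
  "Limsup at_top (\<lambda>\<theta>::real. ereal (1 / \<theta>) * elog (measure (gem_law \<theta>) F)) \<le> 0"
proof -
  have "measure (gem_law \<theta>) F \<le> 1 * exp (- 0 * \<theta>)" if "0 < \<theta>" for \<theta>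
    using prob_space.prob_le_1[OF prob_space_gem[OF that]] by simp
  from limsup_upper[OF this] show ?thesis by (simp add: zero_ereal_def)
qed

lemma ereal_bound_from_reals:
  fixes L c :: ereal
  assumes L0: "L \<le> 0" and H: "\<And>s. 0 \<le> s \<Longrightarrow> ereal s < c \<Longrightarrow> L \<le> ereal (- s)"
  shows "L \<le> - c"
proof (rule ccontr)
  assume "\<not> L \<le> - c"
  then have "- L < c" by (simp add: not_le ereal_uminus_less_reorder)
  then obtain z where z: "- L < z" "z < c" using dense by blast
  have L0': "0 \<le> - L" using L0 by (simp add: ereal_uminus_le_reorder)
  have z0: "0 < z" using L0' z(1) by (rule le_less_trans)
  then obtain s where zs: "z = ereal s" using z(2) by (cases z) auto
  then have "0 \<le> s" using z0 by simp
  then have "L \<le> ereal (- s)" using H z(2) zs by simp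
  then have "ereal s \<le> - L" using ereal_minus_le_minus[of "ereal (- s)" L] by simp
  then show False using z(1) zs by simp
qed

theorem theorem2p2:
  shows "(\<forall>F. closedin (top_of_set gem_simplex) F \<longrightarrow>
            Limsup at_top (\<lambda>\<theta>::real. ereal (1 / \<theta>) * elog (measure (gem_law \<theta>) F))
              \<le> - (INF x\<in>F. gem_rate x))
       \<and> (\<forall>G. openin (top_of_set gem_simplex) G \<longrightarrow>
            Liminf at_top (\<lambda>\<theta>::real. ereal (1 / \<theta>) * elog (measure (gem_law \<theta>) G))
              \<ge> - (INF x\<in>G. gem_rate x))"
proof (intro conjI allI impI)
  fix F assume F: "closedin (top_of_set gem_simplex) F"
  show "Limsup at_top (\<lambda>\<theta>::real. ereal (1 / \<theta>) * elog (measure (gem_law \<theta>) F))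
              \<le> - (INF x\<in>F. gem_rate x)"
    by (rule ereal_bound_from_reals[OF limsup_le0 upper_closed[OF F]])
next
  fix G assume G: "openin (top_of_set gem_simplex) G"
  obtain V where V: "open V" "G = gem_simplex \<inter> V" using G unfolding openin_open by blast
  let ?L = "Liminf at_top (\<lambda>\<theta>::real. ereal (1 / \<theta>) * elog (measure (gem_law \<theta>) G))"
  have "- ?L \<le> gem_rate x" if x: "x \<in> G" for x
  proof (cases "gem_rate x = \<infinity>")
    case True then show ?thesis by simp
  next
    case False
    then have xs: "x \<in> gem_simplex" "suminf x < 1" and r: "gem_rate x = ereal (ln (1 / (1 - suminf x)))"
      unfolding gem_rate_def by (auto split: if_splits)
    have e: "G = V \<inter> gem_simplex" using V(2) by blast
    have "ereal (ln (1 - suminf x)) \<le> ?L"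
      unfolding e using lower_point[OF xs V(1)] x V(2) by blast
    moreover have "ln (1 / (1 - suminf x)) = - ln (1 - suminf x)" using xs(2) by (simp add: ln_div)
    ultimately show ?thesis using r by (simp add: ereal_uminus_le_reorder)
  qed
  then have "- ?L \<le> (INF x\<in>G. gem_rate x)" by (rule INF_greatest)
  then show "- (INF x\<in>G. gem_rate x) \<le> ?L" by (simp add: ereal_uminus_le_reorder)
qed

end
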